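(* Let $F$ be an undirected forest on $n \geq 2$ vertices and let $k \geq 2$ be a natural number. Then $\psi_b(F,k) \geq \frac{n+3k-1}{2k}$. Moreover, this lower bound is tight (it is attained whenever the expression $\frac{n+3k-1}{2k}$ is an integer).
   Context: In an undirected forest, a leaf is a vertex of degree $1$, an isolated vertex is a vertex of degree $0$, and a branching vertex is a vertex of degree at least $3$. A set $P$ of vertices of $F$ is a branching $k$-path vertex cover of $F$ if every vertex of degree at most $1$ belongs to $P$ and every path on $k$ vertices (of length $k-1$) in $F$ contains a branching vertex or a vertex of $P$. The branching $k$-path vertex cover number $\psi_b(F,k)$ is the minimum size of a branching $k$-path vertex cover of $F$. *)

theory Defs
  imports Complex_Main
begin

definition simple_graph :: "'a set \<Rightarrow> ('a \<Rightarrow> 'a \<Rightarrow> bool) \<Rightarrow> bool" where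
  "simple_graph V E \<longleftrightarrow> finite V \<and> (\<forall>u v. E u v \<longrightarrow> E v u)
     \<and> (\<forall>v. \<not> E v v) \<and> (\<forall>u v. E u v \<longrightarrow> u \<in> V \<and> v \<in> V)"

definition is_path :: "'a set \<Rightarrow> ('a \<Rightarrow> 'a \<Rightarrow> bool) \<Rightarrow> 'a list \<Rightarrow> bool" where
  "is_path V E p \<longleftrightarrow> p \<noteq> [] \<and> set p \<subseteq> V \<and> distinct p
     \<and> (\<forall>i. Suc i < length p \<longrightarrow> E (p ! i) (p ! Suc i))"

definition is_cycle :: "'a set \<Rightarrow> ('a \<Rightarrow> 'a \<Rightarrow> bool) \<Rightarrow> 'a list \<Rightarrow> bool" where
  "is_cycle V E c \<longleftrightarrow> is_path V E c \<and> length c \<ge> 3 \<and> E (last c) (hd c)"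

definition forest :: "'a set \<Rightarrow> ('a \<Rightarrow> 'a \<Rightarrow> bool) \<Rightarrow> bool" where
  "forest V E \<longleftrightarrow> simple_graph V E \<and> (\<nexists>c. is_cycle V E c)"

definition degree :: "'a set \<Rightarrow> ('a \<Rightarrow> 'a \<Rightarrow> bool) \<Rightarrow> 'a \<Rightarrow> nat" where
  "degree V E v = card {u \<in> V. E v u}"

definition branching_kpvc :: "'a set \<Rightarrow> ('a \<Rightarrow> 'a \<Rightarrow> bool) \<Rightarrow> nat \<Rightarrow> 'a set \<Rightarrow> bool" where
  "branching_kpvc V E k P \<longleftrightarrow> P \<subseteq> V
     \<and> (\<forall>v\<in>V. degree V E v \<le> 1 \<longrightarrow> v \<in> P)
     \<and> (\<forall>p. is_path V E p \<and> length p = k \<longrightarrow>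
            (\<exists>v\<in>set p. degree V E v \<ge> 3 \<or> v \<in> P))"

definition psi_b :: "'a set \<Rightarrow> ('a \<Rightarrow> 'a \<Rightarrow> bool) \<Rightarrow> nat \<Rightarrow> nat" where
  "psi_b V E k = Min (card ` {P. branching_kpvc V E k P})"

end

theory Submission
  imports Defs
begin


definition ind :: "('a \<Rightarrow> 'a \<Rightarrow> bool) \<Rightarrow> 'a set \<Rightarrow> 'a \<Rightarrow> 'a \<Rightarrow> bool" where
  "ind E S u v \<longleftrightarrow> E u v \<and> u \<in> S \<and> v \<in> S"

lemma is_path_ind: "S \<subseteq> V \<Longrightarrow> is_path S (ind E S) p \<Longrightarrow> is_path V E p"
  by (auto simp: is_path_def ind_def)

lemma forest_ind:
  assumes "forest V E" "S \<subseteq> V" shows "forest S (ind E S)"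
proof -
  have sg: "simple_graph V E" and nc: "\<nexists>c. is_cycle V E c" using assms(1) by (auto simp: forest_def)
  have "simple_graph S (ind E S)"
    using sg assms(2) finite_subset unfolding simple_graph_def ind_def by blast
  moreover have "\<nexists>c. is_cycle S (ind E S) c"
  proof
    assume "\<exists>c. is_cycle S (ind E S) c"
    then obtain c where "is_cycle S (ind E S) c" by blast
    then have "is_cycle V E c" using is_path_ind[OF assms(2)] unfolding is_cycle_def ind_def by blast
    with nc show False by blast
  qed
  ultimately show ?thesis by (simp add: forest_def)
qed

lemma degree_ind: "v \<in> S \<Longrightarrow> degree S (ind E S) v = card {u\<in>S. E v u}"
  unfolding degree_def ind_def by (rule arg_cong[where f=card]) auto

lemma path_length_le:
  assumes "finite V" "is_path V E p" shows "length p \<le> card V"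
proof -
  have "length p = card (set p)" using assms(2) by (simp add: is_path_def distinct_card)
  also have "\<dots> \<le> card V" using assms by (intro card_mono) (auto simp: is_path_def)
  finally show ?thesis .
qed

lemma max_path:
  assumes "finite V" "V \<noteq> {}"
  shows "\<exists>p. is_path V E p \<and> (\<forall>q. is_path V E q \<longrightarrow> length q \<le> length p)"
proof -
  obtain v where v: "v \<in> V" using assms by blast
  have "is_path V E [v]" using v by (simp add: is_path_def)
  then show ?thesis
    using ex_has_greatest_nat[of "is_path V E" "[v]" length "Suc (card V)"]
      path_length_le[OF assms(1)] by (meson le_imp_less_Suc)
qed

lemma extend_path:
  assumes "is_path V E p" "u \<in> V" "u \<notin> set p" "E (last p) u"
  shows "is_path V E (p @ [u])"
  unfolding is_path_def
proof (intro conjI allI impI)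
  show "p @ [u] \<noteq> []" by simp
  show "set (p @ [u]) \<subseteq> V" using assms by (auto simp: is_path_def)
  show "distinct (p @ [u])" using assms by (auto simp: is_path_def)
  fix i assume i: "Suc i < length (p @ [u])"
  show "E ((p @ [u]) ! i) ((p @ [u]) ! Suc i)"
  proof (cases "Suc i < length p")
    case True then show ?thesis using assms(1) by (simp add: is_path_def nth_append)
  next
    case False
    then have "i = length p - 1" using i by simp
    moreover have "p \<noteq> []" using assms(1) by (simp add: is_path_def)
    ultimately show ?thesis using assms(4) False by (simp add: nth_append last_conv_nth)
  qed
qed

lemma extend_path_front:
  assumes "is_path V E p" "u \<in> V" "u \<notin> set p" "E u (hd p)"
  shows "is_path V E (u # p)"
  unfolding is_path_def
proof (intro conjI allI impI)
  show "u # p \<noteq> []" by simp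
  show "set (u # p) \<subseteq> V" using assms by (auto simp: is_path_def)
  show "distinct (u # p)" using assms by (auto simp: is_path_def)
  fix i assume i: "Suc i < length (u # p)"
  show "E ((u # p) ! i) ((u # p) ! Suc i)"
  proof (cases i)
    case 0
    have "p \<noteq> []" using assms(1) by (simp add: is_path_def)
    then show ?thesis using assms(4) 0 by (simp add: hd_conv_nth)
  next
    case (Suc j)
    then show ?thesis using assms(1) i by (simp add: is_path_def)
  qed
qed

lemma drop_path:
  assumes "is_path V E p" "j < length p" shows "is_path V E (drop j p)"
  using assms unfolding is_path_def
  by (auto dest: in_set_dropD)

lemma take_path:
  assumes "is_path V E p" "0 < j" shows "is_path V E (take j p)"
  using assms unfolding is_path_def
  by (auto dest: in_set_takeD)



lemma max_path_closed:
  assumes sg: "simple_graph V E" and deg2: "\<forall>v\<in>V. degree V E v \<le> 2"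
    and p: "is_path V E p" and mx: "\<forall>q. is_path V E q \<longrightarrow> length q \<le> length p"
    and v: "v \<in> set p" and e: "E v u"
  shows "u \<in> set p"
proof (rule ccontr)
  assume nu: "u \<notin> set p"
  have fin: "finite V" and sym: "\<And>a b. E a b \<Longrightarrow> E b a" and inV: "\<And>a b. E a b \<Longrightarrow> a \<in> V \<and> b \<in> V"
    using sg by (auto simp: simple_graph_def)
  have uV: "u \<in> V" using inV[OF e] by blast
  have pne: "p \<noteq> []" and dp: "distinct p" and adj: "\<And>i. Suc i < length p \<Longrightarrow> E (p ! i) (p ! Suc i)"
    and pV: "set p \<subseteq> V"
    using p by (auto simp: is_path_def)
  obtain i where i: "i < length p" "v = p ! i" using v by (metis in_set_conv_nth)
  consider "i = length p - 1" | "i = 0" | "0 < i \<and> i < length p - 1" using i by linarith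
  then show False
  proof cases
    case 1
    then have "last p = v" using i pne by (simp add: last_conv_nth)
    then have "is_path V E (p @ [u])" using extend_path[OF p uV nu] e by simp
    then show False using mx by fastforce
  next
    case 2
    then have "hd p = v" using i pne by (simp add: hd_conv_nth)
    then have "is_path V E (u # p)" using extend_path_front[OF p uV nu] sym[OF e] by simp
    then show False using mx by fastforce
  next
    case 3
    then obtain j where j: "i = Suc j" by (cases i) auto
    have a: "E v (p ! j)" using adj[of j] sym j i by auto
    have b: "E v (p ! Suc i)" using adj[of i] i 3 by auto
    have ne: "p ! j \<noteq> p ! Suc i" using dp 3 j by (simp add: nth_eq_iff_index_eq)
    have nu1: "u \<noteq> p ! j" "u \<noteq> p ! Suc i" using nu 3 j by auto
    have "{p ! j, p ! Suc i, u} \<subseteq> {w\<in>V. E v w}" using a b e inV by auto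
    then have "card {p ! j, p ! Suc i, u} \<le> degree V E v"
      unfolding degree_def by (rule card_mono[rotated]) (simp add: fin)
    moreover have "card {p ! j, p ! Suc i, u} = 3" using ne nu1 by auto
    moreover have "v \<in> V" using v pV by blast
    ultimately show False using deg2 by fastforce
  qed
qed

lemma leaf_exists:
  assumes f: "forest V E" and ne: "V \<noteq> {}"
  shows "\<exists>x\<in>V. degree V E x \<le> 1"
proof (rule ccontr)
  assume "\<not> ?thesis"
  then have d2: "\<And>x. x \<in> V \<Longrightarrow> 2 \<le> degree V E x" by force
  have sg: "simple_graph V E" and nc: "\<nexists>c. is_cycle V E c" using f by (auto simp: forest_def)
  have fin: "finite V" and sym: "\<And>a b. E a b \<Longrightarrow> E b a" and irr: "\<And>a. \<not> E a a"
    and inV: "\<And>a b. E a b \<Longrightarrow> a \<in> V \<and> b \<in> V"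
    using sg by (auto simp: simple_graph_def)
  obtain p where p: "is_path V E p" and mx: "\<forall>q. is_path V E q \<longrightarrow> length q \<le> length p"
    using max_path[OF fin ne] by blast
  have pne: "p \<noteq> []" and dp: "distinct p" and adj: "\<And>i. Suc i < length p \<Longrightarrow> E (p ! i) (p ! Suc i)"
    and pV: "set p \<subseteq> V"
    using p by (auto simp: is_path_def)
  define m where "m = length p"
  have m1: "1 \<le> m" using pne by (simp add: m_def Suc_le_eq)
  define v where "v = last p"
  have vn: "v = p ! (m - 1)" using pne by (simp add: v_def m_def last_conv_nth)
  have vV: "v \<in> V" using pV pne by (auto simp: v_def)
  define pre where "pre = (if 2 \<le> m then p ! (m - 2) else v)"
  define N where "N = {w\<in>V. E v w}"
  have "2 \<le> card N" using d2[OF vV] by (simp add: N_def degree_def)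
  then have "1 \<le> card (N - {pre})" by (simp add: card_Diff_singleton_if) linarith
  then have "N - {pre} \<noteq> {}" by (metis card.empty not_one_le_zero)
  then obtain u where uN: "u \<in> N" and upre: "u \<noteq> pre" by blast
  have e: "E v u" and uV: "u \<in> V" using uN by (auto simp: N_def)
  show False
  proof (cases "u \<in> set p")
    case False
    then have "is_path V E (p @ [u])" using extend_path[OF p uV False] e by (simp add: v_def)
    then show False using mx by fastforce
  next
    case True
    then obtain j where j: "j < m" "u = p ! j" by (metis in_set_conv_nth m_def)
    have "j \<noteq> m - 1" using j vn irr e by auto
    moreover have "j \<noteq> m - 2 \<or> m < 2" using j upre by (auto simp: pre_def split: if_splits)
    ultimately have j3: "j + 3 \<le> m" using j m1 by auto
    define c where "c = drop j p"
    have "is_path V E c" using drop_path[OF p] j by (simp add: c_def m_def)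
    moreover have "3 \<le> length c" using j3 by (simp add: c_def m_def)
    moreover have "last c = v" using j by (simp add: c_def v_def m_def)
    moreover have "hd c = u" using j by (simp add: c_def m_def hd_drop_conv_nth)
    ultimately have "is_cycle V E c" using e by (simp add: is_cycle_def)
    then show False using nc by blast
  qed
qed

lemma sum_deg_forest:
  assumes "forest V E" "V \<noteq> {}"
  shows "(\<Sum>v\<in>V. degree V E v) + 2 \<le> 2 * card V"
  using assms
proof (induction "card V" arbitrary: V E rule: less_induct)
  case less
  have sg: "simple_graph V E" using less.prems by (simp add: forest_def)
  have fin: "finite V" and sym: "\<And>a b. E a b \<Longrightarrow> E b a" and irr: "\<And>a. \<not> E a a"
    and inV: "\<And>a b. E a b \<Longrightarrow> a \<in> V \<and> b \<in> V"
    using sg by (auto simp: simple_graph_def)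
  obtain x where x: "x \<in> V" "degree V E x \<le> 1" using leaf_exists less.prems by blast
  show ?case
  proof (cases "V = {x}")
    case True
    have "degree V E x = 0" using True irr by (simp add: degree_def)
    then show ?thesis using True by simp
  next
    case False
    define V' where "V' = V - {x}"
    have V'ne: "V' \<noteq> {}" using False x by (auto simp: V'_def)
    have f': "forest V' (ind E V')" using forest_ind[OF less.prems(1), of V'] by (auto simp: V'_def)
    have cV: "card V = Suc (card V')" using card_Suc_Diff1[OF fin x(1)] by (simp add: V'_def)
    have IH: "(\<Sum>v\<in>V'. degree V' (ind E V') v) + 2 \<le> 2 * card V'"
      using less.hyps[of V' "ind E V'"] cV f' V'ne by simp
    have dv: "degree V E v = degree V' (ind E V') v + (if E v x then 1 else 0)" if v: "v \<in> V'" for v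
    proof -
      have "{u\<in>V. E v u} = {u\<in>V'. E v u} \<union> (if E v x then {x} else {})"
        using x by (auto simp: V'_def)
      moreover have "finite V'" using fin by (simp add: V'_def)
      ultimately have "degree V E v = card {u\<in>V'. E v u} + (if E v x then 1 else 0)"
        by (simp add: degree_def V'_def)
      then show ?thesis using degree_ind[OF v] by simp
    qed
    have s1: "(\<Sum>v\<in>V. degree V E v) = degree V E x + (\<Sum>v\<in>V'. degree V E v)"
      using x fin by (simp add: V'_def sum.remove)
    have s2: "(\<Sum>v\<in>V'. degree V E v) = (\<Sum>v\<in>V'. degree V' (ind E V') v) + (\<Sum>v\<in>V'. (if E v x then 1 else 0))"
      using dv by (simp add: sum.distrib)
    have "(\<Sum>v\<in>V'. (if E v x then 1 else 0::nat)) = card {v\<in>V'. E v x}"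
      using fin by (simp add: V'_def sum.If_cases Int_def)
    also have "{v\<in>V'. E v x} = {v\<in>V. E x v}" using sym irr inV by (auto simp: V'_def)
    finally have s3: "(\<Sum>v\<in>V'. (if E v x then 1 else 0::nat)) = degree V E x" by (simp add: degree_def)
    show ?thesis using s1 s2 s3 IH x(2) cV by linarith
  qed
qed



lemma S_bound:
  assumes "forest V E" "\<forall>v\<in>V. degree V E v \<le> 2" "\<forall>p. is_path V E p \<longrightarrow> length p \<noteq> Suc K"
  shows "2 * card V + K * (\<Sum>v\<in>V. degree V E v) \<le> K * (2 * card V)"
  using assms
proof (induction "card V" arbitrary: V E rule: less_induct)
  case less
  have sg: "simple_graph V E" using less.prems by (simp add: forest_def)
  have fin: "finite V" and sym: "\<And>a b. E a b \<Longrightarrow> E b a" and irr: "\<And>a. \<not> E a a"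
    and inV: "\<And>a b. E a b \<Longrightarrow> a \<in> V \<and> b \<in> V"
    using sg by (auto simp: simple_graph_def)
  show ?case
  proof (cases "V = {}")
    case True then show ?thesis by simp
  next
    case False
    obtain p where p: "is_path V E p" and mx: "\<forall>q. is_path V E q \<longrightarrow> length q \<le> length p"
      using max_path[OF fin False] by blast
    define S where "S = set p"
    have cl: "\<And>v u. v \<in> S \<Longrightarrow> E v u \<Longrightarrow> u \<in> S"
      using max_path_closed[OF sg less.prems(2) p mx] by (auto simp: S_def)
    have SV: "S \<subseteq> V" using p by (simp add: S_def is_path_def)
    have Sne: "S \<noteq> {}" using p by (simp add: S_def is_path_def)
    have cS: "card S = length p" using p by (simp add: S_def is_path_def distinct_card)
    have lt: "length p < Suc K"
    proof (rule ccontr)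
      assume "\<not> ?thesis"
      then have "is_path V E (take (Suc K) p)" "length (take (Suc K) p) = Suc K"
        using take_path[OF p, of "Suc K"] by auto
      then show False using less.prems(3) by blast
    qed
    have fS: "forest S (ind E S)" using forest_ind[OF less.prems(1) SV] .
    have dS: "degree S (ind E S) v = degree V E v" if "v \<in> S" for v
    proof -
      have "{u\<in>S. E v u} = {u\<in>V. E v u}" using cl that inV by auto
      then show ?thesis using degree_ind[OF that] by (simp add: degree_def)
    qed
    have F1: "(\<Sum>v\<in>S. degree V E v) + 2 \<le> 2 * card S"
      using sum_deg_forest[OF fS Sne] dS by simp
    define V' where "V' = V - S"
    have fV': "forest V' (ind E V')" using forest_ind[OF less.prems(1)] by (simp add: V'_def)
    have dV': "degree V' (ind E V') v = degree V E v" if "v \<in> V'" for v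
    proof -
      have "{u\<in>V'. E v u} = {u\<in>V. E v u}" using cl that inV sym by (auto simp: V'_def)
      then show ?thesis using degree_ind[OF that] by (simp add: degree_def)
    qed
    have cV: "card V = card S + card V'" using fin SV
      by (metis V'_def card_Diff_subset card_mono finite_subset le_add_diff_inverse)
    have lt2: "card V' < card V" using cV Sne fin SV
    proof -
      have "0 < card S" using Sne fin SV by (meson card_gt_0_iff finite_subset)
      then show ?thesis using cV by linarith
    qed
    have IH: "2 * card V' + K * (\<Sum>v\<in>V'. degree V' (ind E V') v) \<le> K * (2 * card V')"
    proof (rule less.hyps[OF lt2 fV'])
      show "\<forall>v\<in>V'. degree V' (ind E V') v \<le> 2" using dV' less.prems(2) by (auto simp: V'_def)
      show "\<forall>q. is_path V' (ind E V') q \<longrightarrow> length q \<noteq> Suc K"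
        using is_path_ind[of V' V E] less.prems(3) by (auto simp: V'_def)
    qed
    have IH': "2 * card V' + K * (\<Sum>v\<in>V'. degree V E v) \<le> K * (2 * card V')"
      using IH dV' by simp
    have split: "(\<Sum>v\<in>V. degree V E v) = (\<Sum>v\<in>S. degree V E v) + (\<Sum>v\<in>V'. degree V E v)"
      using fin SV by (simp add: V'_def sum.subset_diff)
    define A where "A = (\<Sum>v\<in>S. degree V E v)"
    define Bs where "Bs = (\<Sum>v\<in>V'. degree V E v)"
    have m1: "K * (A + 2) \<le> K * (2 * card S)" by (rule mult_le_mono2) (use F1 in \<open>simp add: A_def\<close>)
    have s: "card S \<le> K" using cS lt by simp
    have h1: "K * A + 2 * K \<le> 2 * (K * card S)" using m1 by (simp add: algebra_simps)
    have h2: "2 * card V' + K * Bs \<le> 2 * (K * card V')" using IH' by (simp add: Bs_def algebra_simps)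
    have h3: "2 * card S + 2 * card V' + (K * A + K * Bs) \<le> 2 * (K * card S) + 2 * (K * card V')"
      using h1 h2 s by linarith
    have "2 * card V + K * (\<Sum>v\<in>V. degree V E v) = 2 * card S + 2 * card V' + (K * A + K * Bs)"
      using split cV by (simp add: A_def Bs_def algebra_simps)
    moreover have "K * (2 * card V) = 2 * (K * card S) + 2 * (K * card V')"
      using cV by (simp add: algebra_simps)
    ultimately show ?thesis using h3 by simp
  qed
qed



lemma arith_final:
  fixes a b u i D K :: nat
  assumes "a + 3 * b \<le> D" "D + 2 \<le> 2 * a + 2 * b" "2 * u \<le> K * D"
  shows "i + u + a + b + 3 * Suc K \<le> 2 * Suc K * (a + i) + 1"
proof -
  have "D + 6 \<le> 4 * a" using assms(1,2) by linarith
  then have "K * (D + 6) \<le> K * (4 * a)" by (rule mult_le_mono2)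
  then have "K * D + 6 * K \<le> 4 * (K * a)" by (simp add: algebra_simps)
  moreover have "b + 2 \<le> a" using assms(1,2) by linarith
  moreover have "2 * Suc K * (a + i) = 2 * (K * a) + 2 * (K * i) + 2 * a + 2 * i" by (simp add: algebra_simps)
  moreover have "3 * Suc K = 3 * K + 3" by simp
  ultimately show ?thesis using assms(3) by linarith
qed

lemma arith_iso:
  fixes n p K :: nat
  assumes "2 \<le> n" "n \<le> p"
  shows "n + 3 * Suc K \<le> 2 * Suc K * p + 1"
proof -
  have "K * n \<le> K * p" using assms(2) by (rule mult_le_mono2)
  moreover have "2 * Suc K * p = 2 * p + 2 * (K * p)" by (simp add: algebra_simps)
  moreover have "K * 2 \<le> K * n" using assms(1) by (rule mult_le_mono2)
  moreover have "3 * Suc K = 3 * K + 3" by simp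
  ultimately show ?thesis using assms by linarith
qed

lemma lower_bound:
  assumes f: "forest V E" and n2: "2 \<le> card V" and cov: "branching_kpvc V E (Suc K) P"
  shows "card V + 3 * Suc K \<le> 2 * Suc K * card P + 1"
proof -
  have sg: "simple_graph V E" using f by (simp add: forest_def)
  have fin: "finite V" and sym: "\<And>a b. E a b \<Longrightarrow> E b a" and irr: "\<And>a. \<not> E a a"
    and inV: "\<And>a b. E a b \<Longrightarrow> a \<in> V \<and> b \<in> V"
    using sg by (auto simp: simple_graph_def)
  define d where "d = degree V E"
  have PV: "P \<subseteq> V" and leafP: "\<And>v. v \<in> V \<Longrightarrow> d v \<le> 1 \<Longrightarrow> v \<in> P"
    and kp: "\<And>p. is_path V E p \<Longrightarrow> length p = Suc K \<Longrightarrow> \<exists>v\<in>set p. 3 \<le> d v \<or> v \<in> P"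
    using cov by (auto simp: branching_kpvc_def d_def)
  have finP: "finite P" using PV fin finite_subset by blast
  define I where "I = {v\<in>V. d v = 0}"
  define B where "B = {v\<in>V. 3 \<le> d v}"
  define U where "U = V - P - B"
  define V' where "V' = V - I"
  define W' where "W' = V' - U"
  have IP: "I \<subseteq> P" using leafP by (auto simp: I_def)
  have nbr: "d v \<noteq> 0" if "E v u" for v u
  proof -
    have "u \<in> {w\<in>V. E v w}" using that inV by auto
    then have "{w\<in>V. E v w} \<noteq> {}" by blast
    then show ?thesis using fin by (simp add: d_def degree_def)
  qed
  have nbr2: "d u \<noteq> 0" if "E v u" for v u using nbr[OF sym[OF that]] .
  show ?thesis
  proof (cases "V' = {}")
    case True
    then have "V \<subseteq> P" using IP by (auto simp: V'_def)
    then have "card V \<le> card P" using finP by (rule card_mono[rotated])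
    then show ?thesis using arith_iso n2 by blast
  next
    case False
    have fV': "forest V' (ind E V')" using forest_ind[OF f] by (simp add: V'_def)
    have V'V: "V' \<subseteq> V" by (auto simp: V'_def)
    have dV': "degree V' (ind E V') v = d v" if "v \<in> V'" for v
    proof -
      have "{u\<in>V'. E v u} = {u\<in>V. E v u}"
        using inV sym nbr nbr2 by (auto simp: V'_def I_def)
      then show ?thesis using degree_ind[OF that] by (simp add: degree_def d_def)
    qed
    have F1: "(\<Sum>v\<in>V'. d v) + 2 \<le> 2 * card V'"
      using sum_deg_forest[OF fV' False] dV' by simp
    have UV': "U \<subseteq> V'" using IP by (auto simp: U_def V'_def)
    have dU: "d u = 2" if "u \<in> U" for u
    proof -
      have "u \<in> V" "u \<notin> P" "u \<notin> B" using that by (auto simp: U_def)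
      then have "\<not> d u \<le> 1" "\<not> 3 \<le> d u" using leafP[of u] by (auto simp: B_def)
      then show ?thesis by linarith
    qed
    have fH: "forest U (ind E U)" using forest_ind[OF f, of U] by (auto simp: U_def)
    define dH where "dH = degree U (ind E U)"
    have dH: "dH u = card {w\<in>U. E u w}" if "u \<in> U" for u
      using degree_ind[OF that] by (simp add: dH_def)
    have finU: "finite U" using fin by (simp add: U_def)
    have finV': "finite V'" using fin by (simp add: V'_def)
    have finW': "finite W'" using finV' by (simp add: W'_def)
    define nW where "nW u = card {w\<in>W'. E u w}" for u
    have dsplit: "d u = dH u + nW u" if "u \<in> U" for u
    proof -
      have "{w\<in>V. E u w} = {w\<in>U. E u w} \<union> {w\<in>W'. E u w}"
        using inV sym nbr nbr2 UV' by (auto simp: W'_def V'_def I_def)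
      moreover have "{w\<in>U. E u w} \<inter> {w\<in>W'. E u w} = {}" by (auto simp: W'_def)
      ultimately have "d u = card {w\<in>U. E u w} + card {w\<in>W'. E u w}"
        using finU finW' by (simp add: d_def degree_def card_Un_disjoint)
      then show ?thesis using dH[OF that] by (simp add: nW_def)
    qed
    have SB: "2 * card U + K * (\<Sum>u\<in>U. dH u) \<le> K * (2 * card U)"
      unfolding dH_def
    proof (rule S_bound[OF fH])
      show "\<forall>v\<in>U. degree U (ind E U) v \<le> 2"
      proof
        fix v assume v: "v \<in> U"
        have "{w\<in>U. E v w} \<subseteq> {w\<in>V. E v w}" by (auto simp: U_def)
        then have "card {w\<in>U. E v w} \<le> d v" using fin by (simp add: d_def degree_def card_mono)
        then show "degree U (ind E U) v \<le> 2" using dU[OF v] degree_ind[OF v] by simp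
      qed
      show "\<forall>p. is_path U (ind E U) p \<longrightarrow> length p \<noteq> Suc K"
      proof (intro allI impI notI)
        fix p assume p: "is_path U (ind E U) p" and l: "length p = Suc K"
        have "is_path V E p" using is_path_ind[OF _ p] by (auto simp: U_def)
        then obtain v where "v \<in> set p" "3 \<le> d v \<or> v \<in> P" using kp l by blast
        moreover have "set p \<subseteq> U" using p by (simp add: is_path_def)
        ultimately show False by (auto simp: U_def B_def)
      qed
    qed
    define X where "X = (\<Sum>u\<in>U. nW u)"
    have sumU: "(\<Sum>u\<in>U. dH u) + X = 2 * card U"
    proof -
      have "(\<Sum>u\<in>U. dH u) + X = (\<Sum>u\<in>U. d u)" using dsplit by (simp add: X_def sum.distrib)
      also have "\<dots> = 2 * card U" using dU by simp
      finally show ?thesis .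
    qed
    have uX: "2 * card U \<le> K * X"
    proof -
      have "2 * card U + K * (\<Sum>u\<in>U. dH u) \<le> K * ((\<Sum>u\<in>U. dH u) + X)" using SB sumU by simp
      then show ?thesis by (simp add: algebra_simps)
    qed
    define D where "D = (\<Sum>w\<in>W'. d w)"
    have XD: "X \<le> D"
    proof -
      have "X = (\<Sum>u\<in>U. \<Sum>w\<in>W'. (if E u w then 1 else 0::nat))"
        unfolding X_def nW_def using finW' by (simp add: sum.If_cases Int_def)
      also have "\<dots> = (\<Sum>w\<in>W'. \<Sum>u\<in>U. (if E u w then 1 else 0::nat))" by (rule sum.swap)
      also have "\<dots> = (\<Sum>w\<in>W'. card {u\<in>U. E w u})"
      proof -
        have "\<And>w. {x \<in> U. E x w} = {u \<in> U. E w u}" using sym by blast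
        then show ?thesis using finU by (simp add: sum.If_cases Int_def)
      qed
      also have "\<dots> \<le> D" unfolding D_def d_def degree_def
      proof (rule sum_mono)
        fix w assume "w \<in> W'"
        have "{u\<in>U. E w u} \<subseteq> {u\<in>V. E w u}" by (auto simp: U_def)
        then show "card {u\<in>U. E w u} \<le> card {u\<in>V. E w u}" using fin by (simp add: card_mono)
      qed
      finally show ?thesis .
    qed
    have V'split: "(\<Sum>v\<in>V'. d v) = (\<Sum>v\<in>U. d v) + D"
      using finV' UV' by (simp add: D_def W'_def sum.subset_diff)
    have cV'split: "card V' = card U + card W'"
      using finV' UV' by (metis W'_def card_Diff_subset card_mono finite_subset le_add_diff_inverse)
    have D2: "D + 2 \<le> 2 * card W'" using F1 V'split cV'split dU by simp
    define P' where "P' = P - I"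
    define B' where "B' = B - P"
    have W'eq: "W' = P' \<union> B'" using PV by (auto simp: W'_def V'_def U_def P'_def B'_def I_def B_def)
    have disj: "P' \<inter> B' = {}" by (auto simp: P'_def B'_def)
    have finP': "finite P'" and finB': "finite B'" using finW' W'eq by auto
    have cW': "card W' = card P' + card B'" using W'eq disj finP' finB' by (simp add: card_Un_disjoint)
    have Dsplit: "D = (\<Sum>w\<in>P'. d w) + (\<Sum>w\<in>B'. d w)"
      using W'eq disj finP' finB' by (simp add: D_def sum.union_disjoint)
    have "(\<Sum>w\<in>P'. 1) \<le> (\<Sum>w\<in>P'. d w)"
      by (rule sum_mono) (use PV in \<open>auto simp: P'_def I_def\<close>)
    moreover have "(\<Sum>w\<in>B'. 3) \<le> (\<Sum>w\<in>B'. d w)"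
      by (rule sum_mono) (auto simp: B'_def B_def)
    ultimately have D1: "card P' + 3 * card B' \<le> D" using Dsplit by simp
    have cP: "card P = card P' + card I"
      using IP finP by (metis P'_def card_Diff_subset card_mono finite_subset le_add_diff_inverse2)
    have cV: "card V = card I + card V'"
      using fin by (metis V'_def I_def card_Diff_subset card_mono finite_subset le_add_diff_inverse mem_Collect_eq subsetI)
    have "card I + card U + card P' + card B' + 3 * Suc K \<le> 2 * Suc K * (card P' + card I) + 1"
      by (rule arith_final[OF D1]) (use D2 cW' uX XD in \<open>auto intro: order_trans mult_le_mono2\<close>)
    then show ?thesis using cP cV cV'split cW' by simp
  qed
qed



lemma parent_forest:
  fixes V :: "nat set"
  assumes fin: "finite V" and AV: "A \<subseteq> V" and pa: "\<And>v. v \<in> A \<Longrightarrow> par v < v \<and> par v \<in> V"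
    and Edef: "\<And>u v. E u v \<longleftrightarrow> (v \<in> A \<and> u = par v) \<or> (u \<in> A \<and> v = par u)"
  shows "forest V E"
proof -
  have sg: "simple_graph V E"
    unfolding simple_graph_def
  proof (intro conjI allI impI)
    show "finite V" by (rule fin)
    fix u v
    show "E u v \<Longrightarrow> E v u" by (simp only: Edef) blast
    show "\<not> E v v"
    proof
      assume "E v v"
      then have "v \<in> A \<and> v = par v" by (simp only: Edef) blast
      then show False using pa[of v] by simp
    qed
    show "E u v \<Longrightarrow> u \<in> V" using pa AV by (simp only: Edef) blast
    show "E u v \<Longrightarrow> v \<in> V" using pa AV by (simp only: Edef) blast
  qed
  have "\<nexists>c. is_cycle V E c"
  proof
    assume "\<exists>c. is_cycle V E c"
    then obtain c where c: "is_cycle V E c" by blast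
    define l where "l = length c"
    have l3: "3 \<le> l" and dc: "distinct c" and adj: "\<And>j. Suc j < l \<Longrightarrow> E (c ! j) (c ! Suc j)"
      and cl: "E (last c) (hd c)" and cne: "c \<noteq> []"
      using c by (auto simp: is_cycle_def is_path_def l_def)
    have lastc: "last c = c ! (l - 1)" and hdc: "hd c = c ! 0" using cne by (auto simp: l_def last_conv_nth hd_conv_nth)
    define x where "x = Max (set c)"
    have "x \<in> set c" using cne by (simp add: x_def)
    then obtain i where i: "i < l" "c ! i = x" by (metis in_set_conv_nth l_def)
    have key: "y = par x" if "y \<in> set c" "E x y \<or> E y x" for y
    proof -
      have yx: "y \<le> x" using that(1) by (simp add: x_def)
      have "E x y" using that(2) sg unfolding simple_graph_def by blast
      then have "(y \<in> A \<and> x = par y) \<or> (x \<in> A \<and> y = par x)" by (simp only: Edef)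
      then show ?thesis
      proof
        assume "y \<in> A \<and> x = par y"
        then have "x < y" using pa by auto
        then show ?thesis using yx by simp
      qed simp
    qed
    define ip where "ip = (if i = 0 then l - 1 else i - 1)"
    define iq where "iq = (if i = l - 1 then 0 else Suc i)"
    have ipl: "ip < l" and iql: "iq < l" using i l3 by (auto simp: ip_def iq_def)
    have ne: "ip \<noteq> iq" using i l3 by (auto simp: ip_def iq_def)
    have e1: "E (c ! ip) x"
    proof (cases "i = 0")
      case True then show ?thesis using cl lastc hdc i by (simp add: ip_def)
    next
      case False then show ?thesis using adj[of "i - 1"] i by (simp add: ip_def)
    qed
    have e2: "E x (c ! iq)"
    proof (cases "i = l - 1")
      case True then show ?thesis using cl lastc hdc i by (simp add: iq_def)
    next
      case False then show ?thesis using adj[of i] i by (simp add: iq_def)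
    qed
    have "c ! ip = par x" using key[of "c ! ip"] e1 ipl by (simp add: l_def)
    moreover have "c ! iq = par x" using key[of "c ! iq"] e2 iql by (simp add: l_def)
    ultimately have "c ! ip = c ! iq" by simp
    then show False using dc ipl iql ne by (simp add: nth_eq_iff_index_eq l_def)
  qed
  then show ?thesis using sg by (simp add: forest_def)
qed



lemma h_div:
  fixes k v :: nat
  assumes "\<not> k dvd v" shows "(v - 1) div k = v div k"
proof (cases "k = 0")
  case True then show ?thesis by simp
next
  case False
  have r: "v mod k \<noteq> 0" using assms by (simp add: dvd_eq_mod_eq_0)
  have v: "v = k * (v div k) + v mod k" by simp
  have "v mod k < k" using False by simp
  show ?thesis
  proof (rule div_nat_eqI)
    show "k * (v div k) \<le> v - 1" using r v by linarith
    have "k * Suc (v div k) = k * (v div k) + k" by simp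
    then show "v - 1 < k * Suc (v div k)" using v \<open>v mod k < k\<close> by linarith
  qed
qed

lemma h_blk:
  fixes k x c :: nat
  assumes "x div k = c" "\<not> k dvd x" "0 < k"
  shows "c * k + 1 \<le> x \<and> x < c * k + k"
proof -
  have r: "x mod k \<noteq> 0" using assms by (simp add: dvd_eq_mod_eq_0)
  have v: "x = c * k + x mod k" using assms(1) by (metis div_mult_mod_eq)
  have "x mod k < k" using assms(3) by simp
  then show ?thesis using r v by linarith
qed

lemma h_notdvd:
  fixes k c :: nat
  assumes "2 \<le> k" "1 \<le> c" shows "\<not> k dvd (c * k - 1)"
proof
  assume a: "k dvd (c * k - 1)"
  have "k dvd c * k" by simp
  then have "k dvd (c * k - (c * k - 1))" using a by (rule dvd_diff_nat)
  moreover have "c * k - (c * k - 1) = 1" using assms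
    by (metis Suc_diff_1 diff_Suc_1 diff_diff_cancel less_one mult_eq_0_iff not_less_eq_eq one_le_mult_iff  le_zero_eq Suc_1 Suc_le_eq  diff_le_self nat_mult_1 zero_less_diff)
  ultimately show False using assms by simp
qed

definition cN :: "nat \<Rightarrow> nat \<Rightarrow> nat" where "cN k M = (2 * M + 1) * k"
definition cpar :: "nat \<Rightarrow> nat \<Rightarrow> nat \<Rightarrow> nat" where
  "cpar k M v = (if k dvd (v - 1) \<and> (M + 1) * k \<le> v - 1 then v - 1 - M * k else v - 1)"
definition cE :: "nat \<Rightarrow> nat \<Rightarrow> nat \<Rightarrow> nat \<Rightarrow> bool" where
  "cE k M u v \<longleftrightarrow> (v \<in> {1..cN k M} \<and> u = cpar k M v) \<or> (u \<in> {1..cN k M} \<and> v = cpar k M u)"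
definition cP :: "nat \<Rightarrow> nat \<Rightarrow> nat set" where
  "cP k M = (\<lambda>c. c * k) ` ({0} \<union> {M + 1..2 * M + 1})"

lemma cpar_lt: "1 \<le> v \<Longrightarrow> cpar k M v < v"
  by (simp add: cpar_def)

lemma c_forest: "forest {0..cN k M} (cE k M)"
proof (rule parent_forest[where A = "{1..cN k M}" and par = "cpar k M"])
  show "finite {0..cN k M}" by simp
  show "{1..cN k M} \<subseteq> {0..cN k M}" by auto
  fix v assume "v \<in> {1..cN k M}"
  then show "cpar k M v < v \<and> cpar k M v \<in> {0..cN k M}"
    using cpar_lt[of v k M] by auto
next
  fix u v show "cE k M u v = (v \<in> {1..cN k M} \<and> u = cpar k M v \<or> u \<in> {1..cN k M} \<and> v = cpar k M u)"
    by (simp add: cE_def)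
qed

lemma c_card: "card {0..cN k M} = cN k M + 1" by simp

lemma c_cardP: assumes "0 < k" shows "card (cP k M) = M + 2"
proof -
  have "inj_on (\<lambda>c. c * k) ({0} \<union> {M + 1..2 * M + 1})" using assms by (auto simp: inj_on_def)
  then have "card (cP k M) = card ({0} \<union> {M + 1..2 * M + 1})" by (simp add: cP_def card_image)
  also have "\<dots> = M + 2" by simp
  finally show ?thesis .
qed

lemma deg_ge:
  assumes "S \<subseteq> {u\<in>V. E v u}" "finite V"
  shows "card S \<le> degree V E v"
  unfolding degree_def using assms by (intro card_mono) auto

lemma c_deg_nonmult:
  assumes k: "2 \<le> k" and v: "v \<le> cN k M" "\<not> k dvd v"
  shows "2 \<le> degree {0..cN k M} (cE k M) v"
proof -
  have v1: "1 \<le> v" using v by (cases v) auto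
  have "k dvd cN k M" by (simp add: cN_def)
  then have vN: "v \<noteq> cN k M" using v by auto
  have e1: "cE k M v (cpar k M v)" using v v1 by (simp add: cE_def)
  have p1: "cpar k M (v + 1) = v" using v by (simp add: cpar_def)
  have e2: "cE k M v (v + 1)" using v vN p1 by (simp add: cE_def)
  have lt: "cpar k M v < v" using cpar_lt[OF v1] .
  have "{cpar k M v, v + 1} \<subseteq> {u\<in>{0..cN k M}. cE k M v u}" using e1 e2 v vN lt by auto
  then have "card {cpar k M v, v + 1} \<le> degree {0..cN k M} (cE k M) v" by (rule deg_ge) simp
  moreover have "card {cpar k M v, v + 1} = 2" using lt by simp
  ultimately show ?thesis by simp
qed

lemma c_deg_branch:
  assumes k: "2 \<le> k" and c: "1 \<le> c" "c \<le> M"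
  shows "3 \<le> degree {0..cN k M} (cE k M) (c * k)"
proof -
  have ck: "k \<le> c * k" using c by simp
  have ckN: "(c + M) * k + 1 \<le> cN k M"
  proof -
    have a: "(c + M) * k \<le> (2 * M) * k" using c by (intro mult_right_mono) auto
    have b: "cN k M = (2 * M) * k + k" by (simp add: cN_def algebra_simps)
    show ?thesis using a b k by linarith
  qed
  have ck2: "c * k < (c + M) * k" using c k by simp
  have ckN': "c * k + 1 \<le> cN k M" using ckN ck2 by linarith
  have p1: "cpar k M (c * k) = c * k - 1" using h_notdvd[OF k c(1)] by (simp add: cpar_def)
  have p2: "cpar k M (c * k + 1) = c * k"
  proof -
    have "c * k < (M + 1) * k" using c k by (intro mult_strict_right_mono) auto
    then have "\<not> (M + 1) * k \<le> c * k" by simp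
    then show ?thesis by (simp add: cpar_def)
  qed
  have p3: "cpar k M ((c + M) * k + 1) = c * k"
  proof -
    have "(M + 1) * k \<le> (c + M) * k" using c by (intro mult_right_mono) auto
    moreover have "(c + M) * k - M * k = c * k" by (simp add: algebra_simps)
    ultimately show ?thesis by (simp add: cpar_def)
  qed
  have e1: "cE k M (c * k) (c * k - 1)" using p1 ck ckN' k by (simp add: cE_def)
  have e2: "cE k M (c * k) (c * k + 1)" using p2 ckN' by (simp add: cE_def)
  have e3: "cE k M (c * k) ((c + M) * k + 1)" using p3 ckN by (simp add: cE_def)
  have "{c * k - 1, c * k + 1, (c + M) * k + 1} \<subseteq> {u\<in>{0..cN k M}. cE k M (c * k) u}"
    using e1 e2 e3 ckN ckN' by auto
  then have "card {c * k - 1, c * k + 1, (c + M) * k + 1} \<le> degree {0..cN k M} (cE k M) (c * k)"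
    by (rule deg_ge) simp
  moreover have "card {c * k - 1, c * k + 1, (c + M) * k + 1} = 3"
  proof -
    have d1: "c * k - 1 \<noteq> c * k + 1" "c * k - 1 \<noteq> (c + M) * k + 1" "c * k + 1 \<noteq> (c + M) * k + 1"
      using ck2 ck k by linarith+
    then show ?thesis by simp
  qed
  ultimately show ?thesis by simp
qed

lemma c_blk:
  assumes "cE k M u v" "\<not> k dvd u" "\<not> k dvd v"
  shows "u div k = v div k"
proof -
  have "k dvd (x - 1 - M * k)" if "k dvd (x - 1)" for x using dvd_diff_nat[OF that, of "M * k"] by simp
  then have "\<And>x y. \<not> k dvd x \<Longrightarrow> \<not> k dvd y \<Longrightarrow> x = cpar k M y \<Longrightarrow> x = y - 1"
    by (auto simp: cpar_def split: if_splits)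
  then have "u = v - 1 \<or> v = u - 1" using assms by (auto simp: cE_def)
  then show ?thesis using h_div assms(2,3) by metis
qed



lemma c_cover:
  assumes k: "2 \<le> k"
  shows "branching_kpvc {0..cN k M} (cE k M) k (cP k M)"
proof -
  define V where "V = {0..cN k M}"
  define E where "E = cE k M"
  have mult_cases: "v \<in> cP k M \<or> 3 \<le> degree V E v" if v: "v \<in> V" "k dvd v" for v
  proof -
    define c where "c = v div k"
    have vc: "v = c * k" using v by (simp add: c_def)
    have "c * k \<le> (2 * M + 1) * k" using v vc by (simp add: V_def cN_def)
    then have "0 < k \<longrightarrow> c \<le> 2 * M + 1" by (simp only: mult_le_cancel2)
    then have c2: "c \<le> 2 * M + 1" using k by simp
    show ?thesis
    proof (cases "1 \<le> c \<and> c \<le> M")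
      case True
      then show ?thesis using c_deg_branch[OF k, of c M] vc by (simp add: V_def E_def)
    next
      case False
      then have "c \<in> {0} \<union> {M + 1..2 * M + 1}" using c2 by auto
      then have "c * k \<in> cP k M" unfolding cP_def by (rule imageI)
      then show ?thesis using vc by simp
    qed
  qed
  have PV: "cP k M \<subseteq> V"
  proof
    fix v assume "v \<in> cP k M"
    then obtain c where c: "c \<in> {0} \<union> {M + 1..2 * M + 1}" "v = c * k" unfolding cP_def by blast
    then have "c * k \<le> (2 * M + 1) * k" by (intro mult_right_mono) auto
    then show "v \<in> V" using c by (simp add: V_def cN_def)
  qed
  have leaf: "v \<in> cP k M" if "v \<in> V" "degree V E v \<le> 1" for v
  proof (cases "k dvd v")
    case True then show ?thesis using mult_cases that by fastforce
  next
    case False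
    then have "2 \<le> degree V E v" using c_deg_nonmult[OF k, of v M] that by (simp add: V_def E_def)
    then show ?thesis using that by simp
  qed
  have paths: "\<exists>v\<in>set p. 3 \<le> degree V E v \<or> v \<in> cP k M" if p: "is_path V E p" "length p = k" for p
  proof (rule ccontr)
    assume "\<not> ?thesis"
    then have nb: "\<And>v. v \<in> set p \<Longrightarrow> \<not> 3 \<le> degree V E v \<and> v \<notin> cP k M" by blast
    have pV: "set p \<subseteq> V" and dp: "distinct p" and adj: "\<And>i. Suc i < length p \<Longrightarrow> E (p ! i) (p ! Suc i)"
      using p by (auto simp: is_path_def)
    have nm: "\<not> k dvd v" if "v \<in> set p" for v using mult_cases nb that pV by blast
    define c where "c = p ! 0 div k"
    have blk: "p ! i div k = c" if "i < k" for i
      using that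
    proof (induction i)
      case 0 then show ?case by (simp add: c_def)
    next
      case (Suc i)
      have e: "E (p ! i) (p ! Suc i)" using adj Suc p(2) by simp
      have "\<not> k dvd (p ! i)" "\<not> k dvd (p ! Suc i)" using nm Suc p(2) by auto
      then have "p ! i div k = p ! Suc i div k" using c_blk e by (simp add: E_def)
      then show ?case using Suc by simp
    qed
    have "set p \<subseteq> {c * k + 1..<c * k + k}"
    proof
      fix x assume x: "x \<in> set p"
      then obtain i where i: "i < k" "x = p ! i" using p(2) by (metis in_set_conv_nth)
      have "x div k = c" using blk i by simp
      then show "x \<in> {c * k + 1..<c * k + k}" using h_blk[of x k c] nm[OF x] k by auto
    qed
    then have "card (set p) \<le> card {c * k + 1..<c * k + k}" by (intro card_mono) auto
    also have "\<dots> = k - 1" by simp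
    finally have "card (set p) \<le> k - 1" .
    moreover have "card (set p) = k" using dp p(2) by (simp add: distinct_card)
    ultimately show False using k by simp
  qed
  show ?thesis unfolding branching_kpvc_def V_def[symmetric] E_def[symmetric]
    using PV leaf paths by blast
qed

lemma covers_finite: "finite V \<Longrightarrow> finite {P. branching_kpvc V E k P}"
  by (rule finite_subset[of _ "Pow V"]) (auto simp: branching_kpvc_def)

lemma V_cover: assumes "1 \<le> k" shows "branching_kpvc V E k V"
  unfolding branching_kpvc_def
proof (intro conjI ballI allI impI)
  fix p assume p: "is_path V E p \<and> length p = k"
  then have "p \<noteq> []" "set p \<subseteq> V" by (auto simp: is_path_def)
  then show "\<exists>v\<in>set p. 3 \<le> degree V E v \<or> v \<in> V" by (meson hd_in_set subsetD)
qed auto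

lemma psi_attained:
  assumes "finite V" "1 \<le> k"
  shows "\<exists>P. branching_kpvc V E k P \<and> psi_b V E k = card P"
proof -
  have "psi_b V E k \<in> card ` {P. branching_kpvc V E k P}"
  proof -
    have "branching_kpvc V E k V" by (rule V_cover[OF assms(2)])
    then show ?thesis
      unfolding psi_b_def using covers_finite[OF assms(1)] by (intro Min_in) auto
  qed
  then show ?thesis by auto
qed

lemma psi_le:
  assumes "finite V" "branching_kpvc V E k P"
  shows "psi_b V E k \<le> card P"
  unfolding psi_b_def using covers_finite[OF assms(1)] assms(2)
  by (intro Min_le) auto

lemma part1:
  fixes V :: "'a set"
  assumes f: "forest V E" and n2: "2 \<le> card V" and k2: "2 \<le> k"
  shows "card V + 3 * k \<le> 2 * k * psi_b V E k + 1"
proof -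
  have fin: "finite V" using f by (simp add: forest_def simple_graph_def)
  obtain P where P: "branching_kpvc V E k P" "psi_b V E k = card P" using psi_attained[OF fin, of k E] k2 by auto
  obtain K where K: "k = Suc K" using k2 by (cases k) auto
  show ?thesis using lower_bound[OF f n2, of K P] P K by simp
qed

theorem theorem2:
  shows "(\<forall>(V :: 'a set) E n k. forest V E \<and> card V = n \<and> n \<ge> 2 \<and> k \<ge> 2 \<longrightarrow>
            real (psi_b V E k) \<ge> (real n + 3 * real k - 1) / (2 * real k))
       \<and> (\<forall>n k. n \<ge> 2 \<and> k \<ge> 2 \<and> (2 * k) dvd (n + 3 * k - 1) \<longrightarrow>
            (\<exists>(V :: nat set) E. forest V E \<and> card V = n \<and>
               psi_b V E k = (n + 3 * k - 1) div (2 * k)))"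
proof (intro conjI allI impI)
  fix V :: "'a set" and E :: "'a \<Rightarrow> 'a \<Rightarrow> bool" and n k :: nat
  assume a: "forest V E \<and> card V = n \<and> n \<ge> 2 \<and> k \<ge> 2"
  then have "n + 3 * k \<le> 2 * k * psi_b V E k + 1" using part1 by blast
  then have "real (n + 3 * k) \<le> real (2 * k * psi_b V E k + 1)" by (simp only: of_nat_le_iff)
  then have h0: "real n + 3 * real k \<le> 2 * real k * real (psi_b V E k) + 1" by simp
  have h: "real n + 3 * real k - 1 \<le> real (psi_b V E k) * (2 * real k)"
    using h0 by (simp add: mult.commute)
  have "0 < 2 * real k" using a by simp
  then show "real (psi_b V E k) \<ge> (real n + 3 * real k - 1) / (2 * real k)"
    using h by (simp add: pos_divide_le_eq)
next
  fix n k :: nat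
  assume a: "n \<ge> 2 \<and> k \<ge> 2 \<and> (2 * k) dvd (n + 3 * k - 1)"
  then obtain m where m: "n + 3 * k - 1 = 2 * k * m" by (meson dvdE)
  have k2: "2 \<le> k" using a by simp
  have m2: "2 \<le> m"
  proof (rule ccontr)
    assume "\<not> 2 \<le> m"
    then have "m \<le> 1" by simp
    then have "2 * k * m \<le> 2 * k" by simp
    then show False using m a by linarith
  qed
  define M where "M = m - 2"
  have mM: "m = M + 2" using m2 by (simp add: M_def)
  have nN: "n = cN k M + 1"
  proof -
    have "2 * k * m = (2 * M + 1) * k + 3 * k" using mM by (simp add: algebra_simps)
    then show ?thesis using m a by (simp add: cN_def) linarith
  qed
  have dv: "(n + 3 * k - 1) div (2 * k) = m" using m k2 by simp
  have f: "forest {0..cN k M} (cE k M)" by (rule c_forest)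
  have cV: "card {0..cN k M} = n" using nN by simp
  have le: "psi_b {0..cN k M} (cE k M) k \<le> M + 2"
    using psi_le[OF _ c_cover[OF k2, of M]] c_cardP[of k M] k2 by simp
  have ge: "n + 3 * k \<le> 2 * k * psi_b {0..cN k M} (cE k M) k + 1"
    using part1[OF f _ k2] cV a by simp
  have "M + 2 \<le> psi_b {0..cN k M} (cE k M) k"
  proof (rule ccontr)
    assume "\<not> ?thesis"
    then have "psi_b {0..cN k M} (cE k M) k \<le> M + 1" by simp
    then have "2 * k * psi_b {0..cN k M} (cE k M) k \<le> 2 * k * (M + 1)" by (rule mult_le_mono2)
    moreover have "n + 3 * k = 2 * k * (M + 1) + 1 + 2 * k" using nN by (simp add: cN_def algebra_simps)
    ultimately show False using ge k2 by linarith
  qed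
  then have "psi_b {0..cN k M} (cE k M) k = m" using le mM by simp
  then show "\<exists>(V :: nat set) E. forest V E \<and> card V = n \<and> psi_b V E k = (n + 3 * k - 1) div (2 * k)"
  proof (intro exI conjI)
    show "forest {0..cN k M} (cE k M)" by (rule f)
    show "card {0..cN k M} = n" by (rule cV)
    show "psi_b {0..cN k M} (cE k M) k = (n + 3 * k - 1) div (2 * k)" using \<open>psi_b {0..cN k M} (cE k M) k = m\<close> dv by simp
  qed
qed

end
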